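(* Let $\gamma\ge1$ and let $\mathcal{C}\in\mathbb{C}^{2\times2\times\cdots\times2}$ be a tensor of order $2\gamma$ that is Hermitian and $\gamma$-semisymmetric. For $\theta,\phi\in\mathbb{R}$ let $x=(\cos\theta,\ \sin\theta\,e^{-\mathrm{i}\phi})^T$ and $y=(-\sin\theta\,e^{\mathrm{i}\phi},\ \cos\theta)^T$. Then there exist real symmetric matrices $M^{(\alpha,\beta)}\in\mathbb{R}^{3\times3}$, $1\le\alpha,\beta\le\gamma$, determined by $\mathcal{C}$, and real constants $c_x,c_y$ (independent of $\theta,\phi$) such that for all $\theta,\phi\in\mathbb{R}$ $$\mathcal{C}[x]=\sum_{\alpha=1}^{\gamma}\sum_{\beta=1}^{\gamma}z_{\alpha,\beta}^TM^{(\alpha,\beta)}z_{\alpha,\beta}+c_x,\qquad \mathcal{C}[y]=\sum_{\alpha=1}^{\gamma}\sum_{\beta=1}^{\gamma}(-1)^{\alpha}z_{\alpha,\beta}^TM^{(\alpha,\beta)}z_{\alpha,\beta}+c_y,$$ where $z_{\alpha,\beta}=z_{\alpha,\beta}(\theta,\phi)=(\cos\alpha\theta,\,-\sin\alpha\theta\cos\beta\phi,\,-\sin\alpha\theta\sin\beta\phi)^T$.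
   Context: For a vector $a\in\mathbb{C}^2$, $\mathcal{C}[a]=\sum_{i_1,\dots,i_{2\gamma}\in\{1,2\}}\mathcal{C}_{i_1\cdots i_{2\gamma}}\,\overline{a_{i_1}}\cdots\overline{a_{i_\gamma}}\,a_{i_{\gamma+1}}\cdots a_{i_{2\gamma}}$ (i.e. $\mathcal{C}$ contracted with $a^H$ in modes $1,\dots,\gamma$ and with $a^T$ in modes $\gamma+1,\dots,2\gamma$). $\mathcal{C}$ is Hermitian if $\mathcal{C}_{i_1\cdots i_\gamma i_{\gamma+1}\cdots i_{2\gamma}}=\overline{\mathcal{C}_{i_{\gamma+1}\cdots i_{2\gamma}i_1\cdots i_\gamma}}$ for all indices; it is $\gamma$-semisymmetric if its entries are invariant under any permutation of the first $\gamma$ indices and under any permutation of the last $\gamma$ indices. *)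

theory Defs
  imports "HOL-Analysis.Analysis"
begin

text \<open>An order-2g tensor over C^2 is modelled as a function on index lists;
  indices range over {1,2} as in the paper.\<close>

definition tensor_idx :: "nat \<Rightarrow> nat list set" where
  "tensor_idx g = {is. length is = 2 * g \<and> set is \<subseteq> {1, 2}}"

definition tensor_hermitian :: "nat \<Rightarrow> (nat list \<Rightarrow> complex) \<Rightarrow> bool" where
  "tensor_hermitian g C \<longleftrightarrow>
     (\<forall>is \<in> tensor_idx g. C is = cnj (C (drop g is @ take g is)))"

definition tensor_semisymmetric :: "nat \<Rightarrow> (nat list \<Rightarrow> complex) \<Rightarrow> bool" where
  "tensor_semisymmetric g C \<longleftrightarrow>
     (\<forall>is \<in> tensor_idx g. \<forall>p q. p permutes {..<g} \<and> q permutes {..<g} \<longrightarrow>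
        C (map (\<lambda>k. is ! p k) [0..<g] @ map (\<lambda>k. is ! (g + q k)) [0..<g]) = C is)"

text \<open>C[a]: contraction with conj(a) in the first g modes and a in the last g modes;
  a vector a in C^2 is given by its components a 1, a 2.\<close>
definition tensor_eval :: "nat \<Rightarrow> (nat list \<Rightarrow> complex) \<Rightarrow> (nat \<Rightarrow> complex) \<Rightarrow> complex" where
  "tensor_eval g C a =
     (\<Sum>is \<in> tensor_idx g. C is * (\<Prod>k<g. cnj (a (is ! k))) * (\<Prod>k<g. a (is ! (g + k))))"

definition xvec :: "real \<Rightarrow> real \<Rightarrow> nat \<Rightarrow> complex" where
  "xvec \<theta> \<phi> i = (if i = 1 then complex_of_real (cos \<theta>)
                   else complex_of_real (sin \<theta>) * cis (- \<phi>))"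

definition yvec :: "real \<Rightarrow> real \<Rightarrow> nat \<Rightarrow> complex" where
  "yvec \<theta> \<phi> i = (if i = 1 then - complex_of_real (sin \<theta>) * cis \<phi>
                   else complex_of_real (cos \<theta>))"

definition zvec :: "nat \<Rightarrow> nat \<Rightarrow> real \<Rightarrow> real \<Rightarrow> real ^ 3" where
  "zvec \<alpha> \<beta> \<theta> \<phi> = vector [cos (real \<alpha> * \<theta>),
                          - sin (real \<alpha> * \<theta>) * cos (real \<beta> * \<phi>),
                          - sin (real \<alpha> * \<theta>) * sin (real \<beta> * \<phi>)]"

end

theory Submission
  imports Defs
begin


definition Qx :: "nat \<Rightarrow> (nat \<Rightarrow> nat \<Rightarrow> real^3^3) \<Rightarrow> real \<Rightarrow> real \<Rightarrow> real" where
  "Qx g M t p = (\<Sum>a = 1..g. \<Sum>b = 1..g. zvec a b t p \<bullet> (M a b *v zvec a b t p))"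
definition Qy :: "nat \<Rightarrow> (nat \<Rightarrow> nat \<Rightarrow> real^3^3) \<Rightarrow> real \<Rightarrow> real \<Rightarrow> real" where
  "Qy g M t p = (\<Sum>a = 1..g. \<Sum>b = 1..g. (-1) ^ a * (zvec a b t p \<bullet> (M a b *v zvec a b t p)))"

definition RR :: "nat \<Rightarrow> (real \<Rightarrow> real \<Rightarrow> real) \<Rightarrow> (real \<Rightarrow> real \<Rightarrow> real) \<Rightarrow> bool" where
  "RR g h k \<longleftrightarrow> (\<exists>M cx cy. (\<forall>a\<in>{1..g}. \<forall>b\<in>{1..g}. transpose (M a b) = M a b) \<and>
      (\<forall>t p. h t p = Qx g M t p + cx \<and> k t p = Qy g M t p + cy))"

lemma Qx_add: "Qx g (\<lambda>a b. M1 a b + M2 a b) t p = Qx g M1 t p + Qx g M2 t p"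
  by (simp add: Qx_def matrix_vector_mult_add_rdistrib inner_add_right sum.distrib)
lemma Qy_add: "Qy g (\<lambda>a b. M1 a b + M2 a b) t p = Qy g M1 t p + Qy g M2 t p"
  by (simp add: Qy_def matrix_vector_mult_add_rdistrib inner_add_right sum.distrib distrib_left)
lemma Qx_scale: "Qx g (\<lambda>a b. c *\<^sub>R M a b) t p = c * Qx g M t p"
  by (simp add: Qx_def scaleR_matrix_vector_assoc[symmetric] sum_distrib_left)
lemma Qy_scale: "Qy g (\<lambda>a b. c *\<^sub>R M a b) t p = c * Qy g M t p"
  by (simp add: Qy_def scaleR_matrix_vector_assoc[symmetric] sum_distrib_left algebra_simps)

lemma RR_add:
  assumes "RR g h1 k1" "RR g h2 k2"
  shows "RR g (\<lambda>t p. h1 t p + h2 t p) (\<lambda>t p. k1 t p + k2 t p)"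
proof -
  obtain M1 cx1 cy1 where 1: "\<forall>a\<in>{1..g}. \<forall>b\<in>{1..g}. transpose (M1 a b) = M1 a b"
    "\<forall>t p. h1 t p = Qx g M1 t p + cx1 \<and> k1 t p = Qy g M1 t p + cy1" using assms(1) RR_def by blast
  obtain M2 cx2 cy2 where 2: "\<forall>a\<in>{1..g}. \<forall>b\<in>{1..g}. transpose (M2 a b) = M2 a b"
    "\<forall>t p. h2 t p = Qx g M2 t p + cx2 \<and> k2 t p = Qy g M2 t p + cy2" using assms(2) RR_def by blast
  show ?thesis unfolding RR_def
    apply (rule exI[of _ "\<lambda>a b. M1 a b + M2 a b"], rule exI[of _ "cx1+cx2"], rule exI[of _ "cy1+cy2"])
    using 1 2 by (simp add: Qx_add Qy_add transpose_def vec_eq_iff)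
qed

lemma RR_scale:
  assumes "RR g h k"
  shows "RR g (\<lambda>t p. c * h t p) (\<lambda>t p. c * k t p)"
proof -
  obtain M cx cy where 1: "\<forall>a\<in>{1..g}. \<forall>b\<in>{1..g}. transpose (M a b) = M a b"
    "\<forall>t p. h t p = Qx g M t p + cx \<and> k t p = Qy g M t p + cy" using assms(1) RR_def by blast
  show ?thesis unfolding RR_def
    apply (rule exI[of _ "\<lambda>a b. c *\<^sub>R M a b"], rule exI[of _ "c*cx"], rule exI[of _ "c*cy"])
    using 1 by (simp add: Qx_scale Qy_scale transpose_def vec_eq_iff distrib_left)
qed

lemma RR_const:
  assumes "RR g h k"
  shows "RR g (\<lambda>t p. h t p + x) (\<lambda>t p. k t p + y)"
proof -
  obtain M cx cy where 1: "\<forall>a\<in>{1..g}. \<forall>b\<in>{1..g}. transpose (M a b) = M a b"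
    "\<forall>t p. h t p = Qx g M t p + cx \<and> k t p = Qy g M t p + cy" using assms(1) RR_def by blast
  show ?thesis unfolding RR_def
    apply (rule exI[of _ M], rule exI[of _ "cx+x"], rule exI[of _ "cy+y"])
    using 1 by simp
qed

lemma RR_zero: "RR g (\<lambda>t p. 0) (\<lambda>t p. 0)"
  unfolding RR_def
  by (rule exI[of _ "\<lambda>a b. 0"], rule exI[of _ 0], rule exI[of _ 0])
     (simp add: Qx_def Qy_def transpose_def vec_eq_iff)

lemma RR_cong: "RR g h k \<Longrightarrow> (\<And>t p. h' t p = h t p) \<Longrightarrow> (\<And>t p. k' t p = k t p) \<Longrightarrow> RR g h' k'"
proof -
  assume "RR g h k" "\<And>t p. h' t p = h t p" "\<And>t p. k' t p = k t p"
  then have "h' = h" "k' = k" by (auto intro!: ext)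
  then show ?thesis using \<open>RR g h k\<close> by simp
qed

lemma RR_sum:
  assumes "finite A" "\<And>i. i \<in> A \<Longrightarrow> RR g (h i) (k i)"
  shows "RR g (\<lambda>t p. \<Sum>i\<in>A. h i t p) (\<lambda>t p. \<Sum>i\<in>A. k i t p)"
  using assms
proof (induction A rule: finite_induct)
  case empty
  then show ?case using RR_zero by simp
next
  case (insert x F)
  have "RR g (\<lambda>t p. h x t p + (\<Sum>i\<in>F. h i t p)) (\<lambda>t p. k x t p + (\<Sum>i\<in>F. k i t p))"
    using insert by (intro RR_add) auto
  then show ?case using insert by simp
qed

lemma double_delta:
  fixes X :: real and g a0 b0 :: nat
  assumes "a0 \<in> {1..g}" "b0 \<in> {1..g}"
  shows "(\<Sum>a = 1..g. \<Sum>b = 1..g. if a = a0 then (if b = b0 then X else 0) else 0) = X"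
proof -
  have "\<And>a. (\<Sum>b = 1..g. if a = a0 then (if b = b0 then X else 0) else 0) = (if a = a0 then X else 0)"
  proof -
    fix a
    have e: "(\<Sum>b = 1..g. if b = b0 then X else 0) = X"
      by (subst sum.delta) (use assms in auto)
    show "(\<Sum>b = 1..g. if a = a0 then (if b = b0 then X else 0) else 0) = (if a = a0 then X else 0)"
      using e by auto
  qed
  then show ?thesis using assms by simp
qed

lemma RR_gen:
  assumes "a0 \<in> {1..g}" "b0 \<in> {1..g}" "transpose E = E"
  shows "RR g (\<lambda>t p. zvec a0 b0 t p \<bullet> (E *v zvec a0 b0 t p))
              (\<lambda>t p. (-1)^a0 * (zvec a0 b0 t p \<bullet> (E *v zvec a0 b0 t p)))"
proof -
  define M where "M = (\<lambda>a b. if a = a0 \<and> b = b0 then E else 0)"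
  have 1: "Qx g M t p = zvec a0 b0 t p \<bullet> (E *v zvec a0 b0 t p)" for t p
  proof -
    have "Qx g M t p = (\<Sum>a = 1..g. \<Sum>b = 1..g. if a = a0 then (if b = b0 then zvec a0 b0 t p \<bullet> (E *v zvec a0 b0 t p) else 0) else 0)"
      unfolding Qx_def M_def by (intro sum.cong refl) auto
    also have "\<dots> = zvec a0 b0 t p \<bullet> (E *v zvec a0 b0 t p)"
      by (rule double_delta[OF assms(1,2)])
    finally show ?thesis .
  qed
  have 2: "Qy g M t p = (-1)^a0 * (zvec a0 b0 t p \<bullet> (E *v zvec a0 b0 t p))" for t p
  proof -
    have "Qy g M t p = (\<Sum>a = 1..g. \<Sum>b = 1..g. if a = a0 then (if b = b0 then (-1)^a0 * (zvec a0 b0 t p \<bullet> (E *v zvec a0 b0 t p)) else 0) else 0)"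
      unfolding Qy_def M_def by (intro sum.cong refl) auto
    also have "\<dots> = (-1)^a0 * (zvec a0 b0 t p \<bullet> (E *v zvec a0 b0 t p))"
      by (rule double_delta[OF assms(1,2)])
    finally show ?thesis .
  qed
  show ?thesis unfolding RR_def
    apply (rule exI[of _ M], rule exI[of _ 0], rule exI[of _ 0])
    using assms 1 2 by (auto simp: M_def transpose_def vec_eq_iff)
qed



definition mat3 :: "real \<Rightarrow> real \<Rightarrow> real \<Rightarrow> real \<Rightarrow> real \<Rightarrow> real \<Rightarrow> real^3^3" where
  "mat3 d1 d2 d3 e12 e13 e23 = vector [vector [d1, e12, e13], vector [e12, d2, e23], vector [e13, e23, d3]]"

lemma mat3_sym: "transpose (mat3 d1 d2 d3 e12 e13 e23) = mat3 d1 d2 d3 e12 e13 e23"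
  by (simp add: mat3_def transpose_def vec_eq_iff forall_3)

lemma mat3_form: "zvec a b t p \<bullet> (mat3 d1 d2 d3 e12 e13 e23 *v zvec a b t p) =
   d1 * cos (real a * t)^2 + d2 * (sin (real a * t) * cos (real b * p))^2 + d3 * (sin (real a * t) * sin (real b * p))^2
   - 2 * e12 * cos (real a * t) * sin (real a * t) * cos (real b * p)
   - 2 * e13 * cos (real a * t) * sin (real a * t) * sin (real b * p)
   + 2 * e23 * sin (real a * t)^2 * cos (real b * p) * sin (real b * p)"
  by (simp add: mat3_def zvec_def inner_vec_def matrix_vector_mult_def sum_3 power2_eq_square algebra_simps)

lemma shift_cos: "cos (2 * real k * (t + pi/2)) = (-1)^k * cos (2 * real k * t)"
proof -
  have "2 * real k * (t + pi/2) = 2 * real k * t + real k * pi" by (simp add: algebra_simps)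
  then show ?thesis by (simp add: cos_add)
qed

lemma shift_sin: "sin (2 * real k * (t + pi/2)) = (-1)^k * sin (2 * real k * t)"
proof -
  have "2 * real k * (t + pi/2) = 2 * real k * t + real k * pi" by (simp add: algebra_simps)
  then show ?thesis by (simp add: sin_add)
qed

lemma G1:
  assumes "a \<in> {1..g}"
  shows "RR g (\<lambda>t p. cos (2 * real a * t)) (\<lambda>t p. (-1)^a * cos (2 * real a * t))"
proof -
  have "RR g (\<lambda>t p. zvec a 1 t p \<bullet> (mat3 2 0 0 0 0 0 *v zvec a 1 t p))
              (\<lambda>t p. (-1)^a * (zvec a 1 t p \<bullet> (mat3 2 0 0 0 0 0 *v zvec a 1 t p)))"
    using assms by (intro RR_gen mat3_sym) auto
  then have "RR g (\<lambda>t p. zvec a 1 t p \<bullet> (mat3 2 0 0 0 0 0 *v zvec a 1 t p) + (-1))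
              (\<lambda>t p. (-1)^a * (zvec a 1 t p \<bullet> (mat3 2 0 0 0 0 0 *v zvec a 1 t p)) + (- ((-1)^a)))"
    by (rule RR_const)
  then show ?thesis
  proof (rule RR_cong)
    fix t p :: real
    have c: "cos (2 * real a * t) = 2 * cos (real a * t)^2 - 1"
      using cos_double_cos[of "real a * t"] by (simp add: mult.assoc)
    show "cos (2 * real a * t) = zvec a 1 t p \<bullet> (mat3 2 0 0 0 0 0 *v zvec a 1 t p) + (-1)"
      by (simp add: mat3_form c)
    show "(-1)^a * cos (2 * real a * t) = (-1)^a * (zvec a 1 t p \<bullet> (mat3 2 0 0 0 0 0 *v zvec a 1 t p)) + (- ((-1)^a))"
      unfolding c mat3_form by (simp add: algebra_simps)
  qed
qed

lemma G2c:
  assumes "a \<in> {1..g}" "b \<in> {1..g}"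
  shows "RR g (\<lambda>t p. sin (2 * real a * t) * cos (real b * p)) (\<lambda>t p. (-1)^a * (sin (2 * real a * t) * cos (real b * p)))"
proof -
  have "RR g (\<lambda>t p. zvec a b t p \<bullet> (mat3 0 0 0 (-1) 0 0 *v zvec a b t p))
              (\<lambda>t p. (-1)^a * (zvec a b t p \<bullet> (mat3 0 0 0 (-1) 0 0 *v zvec a b t p)))"
    using assms by (intro RR_gen mat3_sym) auto
  then show ?thesis
  proof (rule RR_cong)
    fix t p :: real
    have c: "sin (2 * real a * t) = 2 * sin (real a * t) * cos (real a * t)"
      using sin_double[of "real a * t"] by (simp add: mult.assoc)
    show "sin (2 * real a * t) * cos (real b * p) = zvec a b t p \<bullet> (mat3 0 0 0 (-1) 0 0 *v zvec a b t p)"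
      by (simp add: mat3_form c)
    then show "(-1)^a * (sin (2 * real a * t) * cos (real b * p)) = (-1)^a * (zvec a b t p \<bullet> (mat3 0 0 0 (-1) 0 0 *v zvec a b t p))"
      by simp
  qed
qed

lemma G2s:
  assumes "a \<in> {1..g}" "b \<in> {1..g}"
  shows "RR g (\<lambda>t p. sin (2 * real a * t) * sin (real b * p)) (\<lambda>t p. (-1)^a * (sin (2 * real a * t) * sin (real b * p)))"
proof -
  have "RR g (\<lambda>t p. zvec a b t p \<bullet> (mat3 0 0 0 0 (-1) 0 *v zvec a b t p))
              (\<lambda>t p. (-1)^a * (zvec a b t p \<bullet> (mat3 0 0 0 0 (-1) 0 *v zvec a b t p)))"
    using assms by (intro RR_gen mat3_sym) auto
  then show ?thesis
  proof (rule RR_cong)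
    fix t p :: real
    have c: "sin (2 * real a * t) = 2 * sin (real a * t) * cos (real a * t)"
      using sin_double[of "real a * t"] by (simp add: mult.assoc)
    show "sin (2 * real a * t) * sin (real b * p) = zvec a b t p \<bullet> (mat3 0 0 0 0 (-1) 0 *v zvec a b t p)"
      by (simp add: mat3_form c)
    then show "(-1)^a * (sin (2 * real a * t) * sin (real b * p)) = (-1)^a * (zvec a b t p \<bullet> (mat3 0 0 0 0 (-1) 0 *v zvec a b t p))"
      by simp
  qed
qed

lemma G3c:
  assumes "a \<in> {1..g}" "b \<in> {1..g}"
  shows "RR g (\<lambda>t p. sin (real a * t)^2 * cos (2 * real b * p)) (\<lambda>t p. (-1)^a * (sin (real a * t)^2 * cos (2 * real b * p)))"
proof -
  have "RR g (\<lambda>t p. zvec a b t p \<bullet> (mat3 0 1 (-1) 0 0 0 *v zvec a b t p))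
              (\<lambda>t p. (-1)^a * (zvec a b t p \<bullet> (mat3 0 1 (-1) 0 0 0 *v zvec a b t p)))"
    using assms by (intro RR_gen mat3_sym) auto
  then show ?thesis
  proof (rule RR_cong)
    fix t p :: real
    have c: "cos (2 * real b * p) = cos (real b * p)^2 - sin (real b * p)^2"
      using cos_double[of "real b * p"] by (simp add: mult.assoc)
    show "sin (real a * t)^2 * cos (2 * real b * p) = zvec a b t p \<bullet> (mat3 0 1 (-1) 0 0 0 *v zvec a b t p)"
      unfolding c mat3_form by (simp add: power_mult_distrib algebra_simps)
    then show "(-1)^a * (sin (real a * t)^2 * cos (2 * real b * p)) = (-1)^a * (zvec a b t p \<bullet> (mat3 0 1 (-1) 0 0 0 *v zvec a b t p))"
      by simp
  qed
qed

lemma G3s: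
  assumes "a \<in> {1..g}" "b \<in> {1..g}"
  shows "RR g (\<lambda>t p. sin (real a * t)^2 * sin (2 * real b * p)) (\<lambda>t p. (-1)^a * (sin (real a * t)^2 * sin (2 * real b * p)))"
proof -
  have "RR g (\<lambda>t p. zvec a b t p \<bullet> (mat3 0 0 0 0 0 1 *v zvec a b t p))
              (\<lambda>t p. (-1)^a * (zvec a b t p \<bullet> (mat3 0 0 0 0 0 1 *v zvec a b t p)))"
    using assms by (intro RR_gen mat3_sym) auto
  then show ?thesis
  proof (rule RR_cong)
    fix t p :: real
    have c: "sin (2 * real b * p) = 2 * sin (real b * p) * cos (real b * p)"
      using sin_double[of "real b * p"] by (simp add: mult.assoc)
    show "sin (real a * t)^2 * sin (2 * real b * p) = zvec a b t p \<bullet> (mat3 0 0 0 0 0 1 *v zvec a b t p)"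
      unfolding c mat3_form by (simp add: algebra_simps power2_eq_square)
    then show "(-1)^a * (sin (real a * t)^2 * sin (2 * real b * p)) = (-1)^a * (zvec a b t p \<bullet> (mat3 0 0 0 0 0 1 *v zvec a b t p))"
      by simp
  qed
qed



definition CS :: "nat \<Rightarrow> (real \<Rightarrow> real) \<Rightarrow> bool" where
  "CS n F \<longleftrightarrow> (\<exists>u. \<forall>t. F t = (\<Sum>k\<le>n. u k * cos (2 * real k * t)))"
definition SS :: "nat \<Rightarrow> (real \<Rightarrow> real) \<Rightarrow> bool" where
  "SS n F \<longleftrightarrow> (\<exists>w. \<forall>t. F t = (\<Sum>k\<in>{1..n}. w k * sin (2 * real k * t)))"

lemma CS_add: "CS n F \<Longrightarrow> CS n G \<Longrightarrow> CS n (\<lambda>t. F t + G t)"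
  unfolding CS_def
proof (elim exE)
  fix u v assume "\<forall>t. F t = (\<Sum>k\<le>n. u k * cos (2 * real k * t))" "\<forall>t. G t = (\<Sum>k\<le>n. v k * cos (2 * real k * t))"
  then show "\<exists>w. \<forall>t. F t + G t = (\<Sum>k\<le>n. w k * cos (2 * real k * t))"
    by (intro exI[of _ "\<lambda>k. u k + v k"]) (simp add: sum.distrib distrib_right)
qed

lemma SS_add: "SS n F \<Longrightarrow> SS n G \<Longrightarrow> SS n (\<lambda>t. F t + G t)"
  unfolding SS_def
proof (elim exE)
  fix u v assume "\<forall>t. F t = (\<Sum>k\<in>{1..n}. u k * sin (2 * real k * t))" "\<forall>t. G t = (\<Sum>k\<in>{1..n}. v k * sin (2 * real k * t))"
  then show "\<exists>w. \<forall>t. F t + G t = (\<Sum>k\<in>{1..n}. w k * sin (2 * real k * t))"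
    by (intro exI[of _ "\<lambda>k. u k + v k"]) (simp add: sum.distrib distrib_right)
qed

lemma CS_scale: "CS n F \<Longrightarrow> CS n (\<lambda>t. c * F t)"
  unfolding CS_def
proof (elim exE)
  fix u assume "\<forall>t. F t = (\<Sum>k\<le>n. u k * cos (2 * real k * t))"
  then show "\<exists>w. \<forall>t. c * F t = (\<Sum>k\<le>n. w k * cos (2 * real k * t))"
    by (intro exI[of _ "\<lambda>k. c * u k"]) (simp add: sum_distrib_left mult.assoc)
qed

lemma SS_scale: "SS n F \<Longrightarrow> SS n (\<lambda>t. c * F t)"
  unfolding SS_def
proof (elim exE)
  fix u assume "\<forall>t. F t = (\<Sum>k\<in>{1..n}. u k * sin (2 * real k * t))"
  then show "\<exists>w. \<forall>t. c * F t = (\<Sum>k\<in>{1..n}. w k * sin (2 * real k * t))"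
    by (intro exI[of _ "\<lambda>k. c * u k"]) (simp add: sum_distrib_left mult.assoc)
qed

lemma CS_zero: "CS n (\<lambda>t. 0)"
  unfolding CS_def by (intro exI[of _ "\<lambda>k. 0"]) simp

lemma SS_zero: "SS n (\<lambda>t. 0)"
  unfolding SS_def by (intro exI[of _ "\<lambda>k. 0"]) simp

lemma CS_cong: "CS n G \<Longrightarrow> (\<And>t. F t = G t) \<Longrightarrow> CS n F"
proof -
  assume "CS n G" "\<And>t. F t = G t"
  then have "F = G" by auto
  then show ?thesis using \<open>CS n G\<close> by simp
qed

lemma SS_cong: "SS n G \<Longrightarrow> (\<And>t. F t = G t) \<Longrightarrow> SS n F"
proof -
  assume "SS n G" "\<And>t. F t = G t"
  then have "F = G" by auto
  then show ?thesis using \<open>SS n G\<close> by simp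
qed

lemma CS_sum: "finite A \<Longrightarrow> (\<And>i. i \<in> A \<Longrightarrow> CS n (F i)) \<Longrightarrow> CS n (\<lambda>t. \<Sum>i\<in>A. F i t)"
proof (induction A rule: finite_induct)
  case empty
  then show ?case using CS_zero by simp
next
  case (insert x A)
  then show ?case using CS_add[of n "F x" "\<lambda>t. \<Sum>i\<in>A. F i t"] by simp
qed

lemma SS_sum: "finite A \<Longrightarrow> (\<And>i. i \<in> A \<Longrightarrow> SS n (F i)) \<Longrightarrow> SS n (\<lambda>t. \<Sum>i\<in>A. F i t)"
proof (induction A rule: finite_induct)
  case empty
  then show ?case using SS_zero by simp
next
  case (insert x A)
  then show ?case using SS_add[of n "F x" "\<lambda>t. \<Sum>i\<in>A. F i t"] by simp
qed

lemma delta_sum: "finite A \<Longrightarrow> k \<in> A \<Longrightarrow> (\<Sum>j\<in>A. (if j = k then 1 else 0) * (c j :: real)) = c k"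
proof -
  assume "finite A" "k \<in> A"
  have "(\<Sum>j\<in>A. (if j = k then 1 else 0) * c j) = (\<Sum>j\<in>A. if j = k then c j else 0)"
    by (intro sum.cong) auto
  also have "\<dots> = c k" using \<open>finite A\<close> \<open>k \<in> A\<close> by (simp add: sum.delta)
  finally show ?thesis .
qed

lemma CS_basis: "k \<le> n \<Longrightarrow> CS n (\<lambda>t. cos (2 * real k * t))"
  unfolding CS_def
  by (intro exI[of _ "\<lambda>j. if j = k then 1 else 0"] allI delta_sum[symmetric]) auto

lemma SS_basis: "k \<le> n \<Longrightarrow> SS n (\<lambda>t. sin (2 * real k * t))"
proof (cases "k = 0")
  case True
  then show ?thesis using SS_zero by simp
next
  case False
  assume "k \<le> n"
  then show ?thesis unfolding SS_def using False
    by (intro exI[of _ "\<lambda>j. if j = k then 1 else 0"] allI delta_sum[symmetric]) auto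
qed

lemma CS_mono: "CS n F \<Longrightarrow> n \<le> m \<Longrightarrow> CS m F"
  unfolding CS_def
proof (elim exE)
  fix u assume u: "\<forall>t. F t = (\<Sum>k\<le>n. u k * cos (2 * real k * t))" and nm: "n \<le> m"
  show "\<exists>w. \<forall>t. F t = (\<Sum>k\<le>m. w k * cos (2 * real k * t))"
  proof (intro exI[of _ "\<lambda>k. if k \<le> n then u k else 0"] allI)
    fix t
    have "(\<Sum>k\<le>m. (if k \<le> n then u k else 0) * cos (2 * real k * t)) = (\<Sum>k\<le>n. (if k \<le> n then u k else 0) * cos (2 * real k * t))"
      using nm by (intro sum.mono_neutral_right) auto
    then show "F t = (\<Sum>k\<le>m. (if k \<le> n then u k else 0) * cos (2 * real k * t))" using u by simp
  qed
qed

lemma cos_prod_id: "cos (2 * t) * cos (2 * real (Suc m) * t) = 1/2 * cos (2 * real (Suc (Suc m)) * t) + 1/2 * cos (2 * real m * t)"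
proof -
  have a: "2 * real (Suc (Suc m)) * t = 2 * real (Suc m) * t + 2 * t" by (simp add: algebra_simps)
  have b: "2 * real m * t = 2 * real (Suc m) * t - 2 * t" by (simp add: algebra_simps)
  show ?thesis unfolding a b cos_add cos_diff by (simp add: algebra_simps)
qed

lemma sin_prod_id: "sin (2 * t) * cos (2 * real (Suc m) * t) = 1/2 * sin (2 * real (Suc (Suc m)) * t) + (- 1/2) * sin (2 * real m * t)"
proof -
  have a: "2 * real (Suc (Suc m)) * t = 2 * real (Suc m) * t + 2 * t" by (simp add: algebra_simps)
  have b: "2 * real m * t = 2 * real (Suc m) * t - 2 * t" by (simp add: algebra_simps)
  show ?thesis unfolding a b sin_add sin_diff by (simp add: algebra_simps)
qed

lemma CS_cos2_term: "k \<le> n \<Longrightarrow> CS (Suc n) (\<lambda>t. cos (2 * t) * cos (2 * real k * t))"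
proof (cases k)
  case 0
  then show ?thesis using CS_basis[of 1 "Suc n"] by simp
next
  case (Suc m)
  assume "k \<le> n"
  then have "CS (Suc n) (\<lambda>t. 1/2 * cos (2 * real (Suc (Suc m)) * t) + 1/2 * cos (2 * real m * t))"
    using Suc by (intro CS_add CS_scale CS_basis) auto
  then show ?thesis unfolding Suc by (rule CS_cong) (rule cos_prod_id)
qed

lemma SS_sin2_term: "k \<le> n \<Longrightarrow> SS (Suc n) (\<lambda>t. sin (2 * t) * cos (2 * real k * t))"
proof (cases k)
  case 0
  then show ?thesis using SS_basis[of 1 "Suc n"] by simp
next
  case (Suc m)
  assume "k \<le> n"
  then have "SS (Suc n) (\<lambda>t. 1/2 * sin (2 * real (Suc (Suc m)) * t) + (- 1/2) * sin (2 * real m * t))"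
    using Suc by (intro SS_add SS_scale SS_basis) auto
  then show ?thesis unfolding Suc by (rule SS_cong) (rule sin_prod_id)
qed

lemma CS_cos2: "CS n F \<Longrightarrow> CS (Suc n) (\<lambda>t. cos (2 * t) * F t)"
proof -
  assume "CS n F"
  then obtain u where u: "\<And>t. F t = (\<Sum>k\<le>n. u k * cos (2 * real k * t))" unfolding CS_def by blast
  have "CS (Suc n) (\<lambda>t. \<Sum>k\<le>n. u k * (cos (2 * t) * cos (2 * real k * t)))"
    by (intro CS_sum CS_scale CS_cos2_term) auto
  then show ?thesis by (rule CS_cong) (simp only: u sum_distrib_left mult.left_commute)
qed

lemma SS_sin2: "CS n F \<Longrightarrow> SS (Suc n) (\<lambda>t. sin (2 * t) * F t)"
proof -
  assume "CS n F"
  then obtain u where u: "\<And>t. F t = (\<Sum>k\<le>n. u k * cos (2 * real k * t))" unfolding CS_def by blast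
  have "SS (Suc n) (\<lambda>t. \<Sum>k\<le>n. u k * (sin (2 * t) * cos (2 * real k * t)))"
    by (intro SS_sum SS_scale SS_sin2_term) auto
  then show ?thesis by (rule SS_cong) (simp only: u sum_distrib_left mult.left_commute)
qed

lemma CS_cossq: "CS n F \<Longrightarrow> CS (Suc n) (\<lambda>t. cos t ^ 2 * F t)"
proof -
  assume F: "CS n F"
  have "CS (Suc n) (\<lambda>t. 1/2 * F t)" using CS_mono[OF F, of "Suc n"] by (intro CS_scale) auto
  moreover have "CS (Suc n) (\<lambda>t. 1/2 * (cos (2 * t) * F t))" using F by (intro CS_scale CS_cos2)
  ultimately have "CS (Suc n) (\<lambda>t. 1/2 * F t + 1/2 * (cos (2 * t) * F t))" by (rule CS_add)
  then show ?thesis by (rule CS_cong) (unfold cos_double_cos, simp add: algebra_simps)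
qed

lemma CS_sinsq: "CS n F \<Longrightarrow> CS (Suc n) (\<lambda>t. sin t ^ 2 * F t)"
proof -
  assume F: "CS n F"
  have "CS (Suc n) (\<lambda>t. 1/2 * F t)" using CS_mono[OF F, of "Suc n"] by (intro CS_scale) auto
  moreover have "CS (Suc n) (\<lambda>t. (-1/2) * (cos (2 * t) * F t))" using F by (intro CS_scale CS_cos2)
  ultimately have "CS (Suc n) (\<lambda>t. 1/2 * F t + (-1/2) * (cos (2 * t) * F t))" by (rule CS_add)
  then show ?thesis by (rule CS_cong) (unfold cos_double_sin, simp add: algebra_simps)
qed

lemma CS_pow: "CS (i + j) (\<lambda>t. cos t ^ (2 * i) * sin t ^ (2 * j))"
proof (induction i)
  case 0
  show ?case
  proof (induction j)
    case 0
    then show ?case using CS_basis[of 0 0] by simp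
  next
    case (Suc j)
    then have "CS (Suc j) (\<lambda>t. sin t ^ 2 * (cos t ^ (2 * 0) * sin t ^ (2 * j)))"
      using CS_sinsq by simp
    then have "CS (Suc j) (\<lambda>t. cos t ^ (2 * 0) * sin t ^ (2 * Suc j))"
      by (rule CS_cong) (simp add: power_add power_mult power2_eq_square)
    then show ?case by simp
  qed
next
  case (Suc i)
  then have "CS (Suc (i + j)) (\<lambda>t. cos t ^ 2 * (cos t ^ (2 * i) * sin t ^ (2 * j)))"
    using CS_cossq by blast
  then have "CS (Suc (i + j)) (\<lambda>t. cos t ^ (2 * Suc i) * sin t ^ (2 * j))"
    by (rule CS_cong) (simp add: power_add power_mult power2_eq_square)
  then show ?case by simp
qed

lemma SS_pow: "SS (i + j + 1) (\<lambda>t. cos t ^ (2 * i + 1) * sin t ^ (2 * j + 1))"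
proof -
  have "SS (Suc (i + j)) (\<lambda>t. sin (2 * t) * (1/2 * (cos t ^ (2 * i) * sin t ^ (2 * j))))"
    by (intro SS_sin2 CS_scale CS_pow)
  then have "SS (Suc (i + j)) (\<lambda>t. cos t ^ (2 * i + 1) * sin t ^ (2 * j + 1))"
    by (rule SS_cong) (unfold sin_double, simp add: algebra_simps)
  then show ?thesis by simp
qed



lemma RR_CS0:
  assumes g: "1 \<le> g" and F: "\<And>t. F t = (\<Sum>k\<le>g. u k * cos (2 * real k * t))"
  shows "RR g (\<lambda>t p. F t) (\<lambda>t p. F (t + pi/2))"
proof -
  have "RR g (\<lambda>t p. \<Sum>k\<le>g. u k * cos (2 * real k * t)) (\<lambda>t p. \<Sum>k\<le>g. u k * ((-1)^k * cos (2 * real k * t)))"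
  proof (rule RR_sum)
    fix k assume k: "k \<in> {..g}"
    show "RR g (\<lambda>t p. u k * cos (2 * real k * t)) (\<lambda>t p. u k * ((-1)^k * cos (2 * real k * t)))"
    proof (cases "k = 0")
      case True
      have "RR g (\<lambda>t p. 0 + u 0) (\<lambda>t p. 0 + u 0)" by (rule RR_const[OF RR_zero])
      from this show ?thesis by (rule RR_cong) (simp_all add: True)
    next
      case False
      then show ?thesis using k by (intro RR_scale G1) auto
    qed
  qed auto
  then show ?thesis by (rule RR_cong) (simp_all add: F shift_cos)
qed

lemma RR_SS_odd:
  assumes n: "n \<in> {1..g}" and F: "\<And>t. F t = (\<Sum>k\<in>{1..g}. w k * sin (2 * real k * t))"
  shows "RR g (\<lambda>t p. F t * (A * cos (real n * p) + B * sin (real n * p)))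
              (\<lambda>t p. F (t + pi/2) * (A * cos (real n * p) + B * sin (real n * p)))"
proof -
  have "RR g (\<lambda>t p. \<Sum>k\<in>{1..g}. w k * (A * (sin (2 * real k * t) * cos (real n * p))) + w k * (B * (sin (2 * real k * t) * sin (real n * p))))
             (\<lambda>t p. \<Sum>k\<in>{1..g}. w k * (A * ((-1)^k * (sin (2 * real k * t) * cos (real n * p)))) + w k * (B * ((-1)^k * (sin (2 * real k * t) * sin (real n * p)))))"
  proof (rule RR_sum)
    fix k assume k: "k \<in> {1..g}"
    show "RR g (\<lambda>t p. w k * (A * (sin (2 * real k * t) * cos (real n * p))) + w k * (B * (sin (2 * real k * t) * sin (real n * p))))
             (\<lambda>t p. w k * (A * ((-1)^k * (sin (2 * real k * t) * cos (real n * p)))) + w k * (B * ((-1)^k * (sin (2 * real k * t) * sin (real n * p)))))"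
      using k n by (intro RR_add RR_scale G2c G2s)
  qed auto
  then show ?thesis
  proof (rule RR_cong)
    fix t p
    show "F t * (A * cos (real n * p) + B * sin (real n * p)) = (\<Sum>k\<in>{1..g}. w k * (A * (sin (2 * real k * t) * cos (real n * p))) + w k * (B * (sin (2 * real k * t) * sin (real n * p))))"
      unfolding F sum_distrib_right by (intro sum.cong) (auto simp: algebra_simps)
    show "F (t + pi/2) * (A * cos (real n * p) + B * sin (real n * p)) = (\<Sum>k\<in>{1..g}. w k * (A * ((-1)^k * (sin (2 * real k * t) * cos (real n * p)))) + w k * (B * ((-1)^k * (sin (2 * real k * t) * sin (real n * p)))))"
      unfolding F sum_distrib_right shift_sin by (intro sum.cong) (auto simp: algebra_simps)
  qed
qed

lemma RR_CS_even:
  assumes b: "b \<in> {1..g}" and F: "\<And>t. F t = (\<Sum>k\<le>g. u k * cos (2 * real k * t))"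
    and F0: "F 0 = 0" and F1: "F (pi/2) = 0"
  shows "RR g (\<lambda>t p. F t * (A * cos (2 * real b * p) + B * sin (2 * real b * p)))
              (\<lambda>t p. F (t + pi/2) * (A * cos (2 * real b * p) + B * sin (2 * real b * p)))"
proof -
  have s0: "(\<Sum>k\<le>g. u k) = 0" using F0 F[of 0] by simp
  have s1: "(\<Sum>k\<le>g. u k * (-1)^k) = 0"
  proof -
    have "\<And>k. 2 * real k * (pi/2) = real k * pi" by simp
    then show ?thesis using F1 F[of "pi/2"] by simp
  qed
  have cd: "\<And>k t. cos (2 * real k * t) = 1 - 2 * sin (real k * t)^2"
    using cos_double_sin by (metis mult.assoc)
  have E1: "F t = (\<Sum>k\<le>g. (-2 * u k) * sin (real k * t)^2)" for t
  proof -
    have "F t = (\<Sum>k\<le>g. u k * cos (2 * real k * t)) - (\<Sum>k\<le>g. u k)" using F s0 by simp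
    also have "\<dots> = (\<Sum>k\<le>g. u k * cos (2 * real k * t) - u k)" by (simp add: sum_subtractf)
    also have "\<dots> = (\<Sum>k\<le>g. (-2 * u k) * sin (real k * t)^2)"
      by (intro sum.cong refl, unfold cd, simp add: algebra_simps)
    finally show ?thesis .
  qed
  have E2: "F (t + pi/2) = (\<Sum>k\<le>g. (-2 * u k) * ((-1)^k * sin (real k * t)^2))" for t
  proof -
    have "F (t + pi/2) = (\<Sum>k\<le>g. u k * ((-1)^k * cos (2 * real k * t))) - (\<Sum>k\<le>g. u k * (-1)^k)"
      using F s1 by (simp add: shift_cos)
    also have "\<dots> = (\<Sum>k\<le>g. u k * ((-1)^k * cos (2 * real k * t)) - u k * (-1)^k)" by (simp add: sum_subtractf)
    also have "\<dots> = (\<Sum>k\<le>g. (-2 * u k) * ((-1)^k * sin (real k * t)^2))"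
      by (intro sum.cong refl, unfold cd, simp add: algebra_simps)
    finally show ?thesis .
  qed
  have "RR g (\<lambda>t p. \<Sum>k\<le>g. (-2 * u k) * (A * (sin (real k * t)^2 * cos (2 * real b * p))) + (-2 * u k) * (B * (sin (real k * t)^2 * sin (2 * real b * p))))
             (\<lambda>t p. \<Sum>k\<le>g. (-2 * u k) * (A * ((-1)^k * (sin (real k * t)^2 * cos (2 * real b * p)))) + (-2 * u k) * (B * ((-1)^k * (sin (real k * t)^2 * sin (2 * real b * p)))))"
  proof (rule RR_sum)
    fix k assume k: "k \<in> {..g}"
    show "RR g (\<lambda>t p. (-2 * u k) * (A * (sin (real k * t)^2 * cos (2 * real b * p))) + (-2 * u k) * (B * (sin (real k * t)^2 * sin (2 * real b * p))))
             (\<lambda>t p. (-2 * u k) * (A * ((-1)^k * (sin (real k * t)^2 * cos (2 * real b * p)))) + (-2 * u k) * (B * ((-1)^k * (sin (real k * t)^2 * sin (2 * real b * p)))))"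
    proof (cases "k = 0")
      case True
      show ?thesis using RR_zero by (rule RR_cong) (simp_all add: True)
    next
      case False
      then show ?thesis using k b by (intro RR_add RR_scale G3c G3s) auto
    qed
  qed auto
  then show ?thesis
  proof (rule RR_cong)
    fix t p
    show "F t * (A * cos (2 * real b * p) + B * sin (2 * real b * p)) = (\<Sum>k\<le>g. (-2 * u k) * (A * (sin (real k * t)^2 * cos (2 * real b * p))) + (-2 * u k) * (B * (sin (real k * t)^2 * sin (2 * real b * p))))"
      unfolding E1 sum_distrib_right by (intro sum.cong) (auto simp: algebra_simps)
    show "F (t + pi/2) * (A * cos (2 * real b * p) + B * sin (2 * real b * p)) = (\<Sum>k\<le>g. (-2 * u k) * (A * ((-1)^k * (sin (real k * t)^2 * cos (2 * real b * p)))) + (-2 * u k) * (B * ((-1)^k * (sin (real k * t)^2 * sin (2 * real b * p)))))"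
      unfolding E2 sum_distrib_right by (intro sum.cong) (auto simp: algebra_simps)
  qed
qed



definition Fpq :: "nat \<Rightarrow> nat \<Rightarrow> nat \<Rightarrow> real \<Rightarrow> real" where
  "Fpq g p q t = cos t ^ (2 * g - p - q) * sin t ^ (p + q)"

lemma RR_core:
  assumes g: "1 \<le> g" and pq: "p \<le> g" "q \<le> g" "p \<noteq> q"
    and n: "n = (if q \<le> p then p - q else q - p)"
  shows "RR g (\<lambda>t f. Fpq g p q t * (A * cos (real n * f) + B * sin (real n * f)))
              (\<lambda>t f. Fpq g p q (t + pi/2) * (A * cos (real n * f) + B * sin (real n * f)))"
proof (cases "odd n")
  case True
  have "odd (p + q)" using True n pq by (auto split: if_splits)
  then obtain j where j: "p + q = 2 * j + 1" by (rule oddE)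
  define i where "i = g - j - 1"
  have ij: "2 * g - p - q = 2 * i + 1" "i + j + 1 = g" using j pq i_def by auto
  have "SS (i + j + 1) (\<lambda>t. cos t ^ (2 * i + 1) * sin t ^ (2 * j + 1))" by (rule SS_pow)
  then have "SS g (Fpq g p q)" unfolding Fpq_def ij(2)[symmetric] ij(1)[symmetric] j[symmetric] .
  then obtain w where w: "\<And>t. Fpq g p q t = (\<Sum>k\<in>{1..g}. w k * sin (2 * real k * t))" unfolding SS_def by blast
  have "n \<in> {1..g}" using n pq by auto
  then show ?thesis using w by (rule RR_SS_odd)
next
  case False
  have "even (p + q)" using False n pq by (auto split: if_splits)
  then obtain j where j: "p + q = 2 * j" by (rule evenE)
  define i where "i = g - j"
  have ij: "2 * g - p - q = 2 * i" "i + j = g" using j pq i_def by auto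
  have "CS (i + j) (\<lambda>t. cos t ^ (2 * i) * sin t ^ (2 * j))" by (rule CS_pow)
  then have "CS g (Fpq g p q)" unfolding Fpq_def ij(2)[symmetric] ij(1)[symmetric] j[symmetric] .
  then obtain u where u: "\<And>t. Fpq g p q t = (\<Sum>k\<le>g. u k * cos (2 * real k * t))" unfolding CS_def by blast
  define b where "b = n div 2"
  have nb: "real n = 2 * real b" using False b_def by auto
  have b1: "b \<in> {1..g}" using n pq False b_def by auto
  have "0 < p + q" using pq by auto
  then have F0: "Fpq g p q 0 = 0" by (simp add: Fpq_def)
  have F1: "Fpq g p q (pi/2) = 0" using pq by (simp add: Fpq_def)
  show ?thesis unfolding nb using b1 u F0 F1 by (rule RR_CS_even)
qed

lemma RR_pq:
  assumes g: "1 \<le> g" and pq: "p \<le> g" "q \<le> g"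
  shows "RR g (\<lambda>t f. Fpq g p q t * (A * cos ((real p - real q) * f) + B * sin ((real p - real q) * f)))
              (\<lambda>t f. Fpq g p q (t + pi/2) * (A * cos ((real p - real q) * f) + B * sin ((real p - real q) * f)))"
proof (cases "p = q")
  case True
  have "CS (g - p + p) (\<lambda>t. cos t ^ (2 * (g - p)) * sin t ^ (2 * p))" by (rule CS_pow)
  moreover have e: "2 * g - p - q = 2 * (g - p)" "p + q = 2 * p" "g - p + p = g" using True pq by auto
  ultimately have "CS g (Fpq g p q)" unfolding Fpq_def e by simp
  then obtain u where u: "\<And>t. Fpq g p q t = (\<Sum>k\<le>g. u k * cos (2 * real k * t))" unfolding CS_def by blast
  have "RR g (\<lambda>t f. Fpq g p q t) (\<lambda>t f. Fpq g p q (t + pi/2))" using g u by (rule RR_CS0)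
  then have "RR g (\<lambda>t f. A * Fpq g p q t) (\<lambda>t f. A * Fpq g p q (t + pi/2))" by (rule RR_scale)
  then show ?thesis by (rule RR_cong) (simp_all add: True)
next
  case False
  show ?thesis
  proof (cases "q \<le> p")
    case True
    have "RR g (\<lambda>t f. Fpq g p q t * (A * cos (real (p - q) * f) + B * sin (real (p - q) * f)))
              (\<lambda>t f. Fpq g p q (t + pi/2) * (A * cos (real (p - q) * f) + B * sin (real (p - q) * f)))"
      using g pq False True by (intro RR_core) auto
    then show ?thesis by (rule RR_cong) (simp_all add: True of_nat_diff)
  next
    case nle: False
    have "RR g (\<lambda>t f. Fpq g p q t * (A * cos (real (q - p) * f) + (- B) * sin (real (q - p) * f)))
              (\<lambda>t f. Fpq g p q (t + pi/2) * (A * cos (real (q - p) * f) + (- B) * sin (real (q - p) * f)))"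
      using g pq False nle by (intro RR_core) auto
    moreover have "real p - real q = - real (q - p)" using nle by (simp add: of_nat_diff)
    ultimately show ?thesis by (rule_tac RR_cong) (simp_all del: of_nat_diff)
  qed
qed



lemma finite_tensor_idx: "finite (tensor_idx g)"
proof -
  have "tensor_idx g = {xs. set xs \<subseteq> {1,2} \<and> length xs = 2 * g}" unfolding tensor_idx_def by auto
  then show ?thesis using finite_lists_length_eq[of "{1::nat,2}" "2*g"] by simp
qed

definition sw :: "nat \<Rightarrow> nat list \<Rightarrow> nat list" where
  "sw g xs = drop g xs @ take g xs"

lemma sw_props:
  assumes "xs \<in> tensor_idx g"
  shows "sw g xs \<in> tensor_idx g" "sw g (sw g xs) = xs"
    "\<And>k. k < g \<Longrightarrow> sw g xs ! k = xs ! (g + k)"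
    "\<And>k. k < g \<Longrightarrow> sw g xs ! (g + k) = xs ! k"
proof -
  have l: "length xs = 2 * g" "set xs \<subseteq> {1,2}" using assms by (auto simp: tensor_idx_def)
  have "set (sw g xs) = set xs" unfolding sw_def
    by (metis append_take_drop_id set_append sup_commute)
  then show "sw g xs \<in> tensor_idx g" using l by (simp add: tensor_idx_def sw_def)
  show "sw g (sw g xs) = xs" using l by (simp add: sw_def)
  show "\<And>k. k < g \<Longrightarrow> sw g xs ! k = xs ! (g + k)" using l by (simp add: sw_def nth_append)
  show "\<And>k. k < g \<Longrightarrow> sw g xs ! (g + k) = xs ! k" using l by (simp add: sw_def nth_append)
qed

lemma eval_real:
  assumes H: "tensor_hermitian g C"
  shows "Im (tensor_eval g C a) = 0"
proof -
  define tm where "tm xs = C xs * (\<Prod>k<g. cnj (a (xs ! k))) * (\<Prod>k<g. a (xs ! (g + k)))" for xs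
  have "cnj (tensor_eval g C a) = (\<Sum>xs\<in>tensor_idx g. cnj (tm xs))"
    unfolding tensor_eval_def tm_def by simp
  also have "\<dots> = (\<Sum>xs\<in>tensor_idx g. tm xs)"
  proof (rule sum.reindex_bij_witness[of _ "sw g" "sw g"])
    fix xs assume xs: "xs \<in> tensor_idx g"
    show "sw g (sw g xs) = xs" "sw g xs \<in> tensor_idx g" using sw_props[OF xs] by auto
    have c: "cnj (C xs) = C (sw g xs)" using H xs unfolding tensor_hermitian_def sw_def by auto
    have p1: "(\<Prod>k<g. a (xs ! k)) = (\<Prod>k<g. a (sw g xs ! (g + k)))"
      using sw_props(4)[OF xs] by (intro prod.cong) auto
    have p2: "(\<Prod>k<g. cnj (a (xs ! (g + k)))) = (\<Prod>k<g. cnj (a (sw g xs ! k)))"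
      using sw_props(3)[OF xs] by (intro prod.cong) auto
    show "tm (sw g xs) = cnj (tm xs)" unfolding tm_def by (simp add: c p1 p2)
  qed (use sw_props in auto)
  also have "\<dots> = tensor_eval g C a" unfolding tensor_eval_def tm_def by simp
  finally have "cnj (tensor_eval g C a) = tensor_eval g C a" .
  then have "- Im (tensor_eval g C a) = Im (tensor_eval g C a)" by (metis cnj.sel(2))
  then show ?thesis by simp
qed

lemma yvec_shift: "yvec t f i = cis f * xvec (t + pi/2) f i"
proof -
  have "cis f * cis (- f) = 1" by (simp add: cis_mult)
  then show ?thesis unfolding yvec_def xvec_def
    by (simp add: cos_add sin_add algebra_simps)
qed

lemma eval_y: "tensor_eval g C (yvec t f) = tensor_eval g C (xvec (t + pi/2) f)"
proof -
  have u: "cnj (cis f) * cis f = 1" by (simp add: cis_cnj cis_mult)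
  show ?thesis unfolding tensor_eval_def
  proof (intro sum.cong refl)
    fix xs
    have "C xs * (\<Prod>k<g. cnj (yvec t f (xs ! k))) * (\<Prod>k<g. yvec t f (xs ! (g + k)))
       = C xs * (cnj (cis f) ^ g * (\<Prod>k<g. cnj (xvec (t + pi/2) f (xs ! k)))) * (cis f ^ g * (\<Prod>k<g. xvec (t + pi/2) f (xs ! (g + k))))"
      unfolding yvec_shift by (simp add: prod.distrib)
    also have "\<dots> = C xs * (\<Prod>k<g. cnj (xvec (t + pi/2) f (xs ! k))) * (\<Prod>k<g. xvec (t + pi/2) f (xs ! (g + k))) * (cnj (cis f) * cis f) ^ g"
      by (simp add: power_mult_distrib algebra_simps)
    finally show "C xs * (\<Prod>k<g. cnj (yvec t f (xs ! k))) * (\<Prod>k<g. yvec t f (xs ! (g + k)))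
       = C xs * (\<Prod>k<g. cnj (xvec (t + pi/2) f (xs ! k))) * (\<Prod>k<g. xvec (t + pi/2) f (xs ! (g + k)))"
      unfolding u by simp
  qed
qed

lemma prod_split:
  fixes h :: "nat \<Rightarrow> complex"
  assumes "\<And>k. k < g \<Longrightarrow> i k \<in> {1,2}"
  shows "(\<Prod>k<g. h (i k)) = h 1 ^ (g - card {k\<in>{..<g}. i k = 2}) * h 2 ^ card {k\<in>{..<g}. i k = 2}"
proof -
  have "(\<Prod>k<g. h (i k)) = (\<Prod>k<g. if i k = 2 then h 2 else h 1)"
  proof (intro prod.cong refl)
    fix k assume "k \<in> {..<g}"
    then have "i k = 1 \<or> i k = 2" using assms by auto
    then show "h (i k) = (if i k = 2 then h 2 else h 1)" by auto
  qed
  also have "\<dots> = (\<Prod>k\<in>{..<g} \<inter> {k. i k = 2}. h 2) * (\<Prod>k\<in>{..<g} \<inter> - {k. i k = 2}. h 1)"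
    by (rule prod.If_cases) simp
  also have "\<dots> = h 2 ^ card ({..<g} \<inter> {k. i k = 2}) * h 1 ^ card ({..<g} \<inter> - {k. i k = 2})"
    by simp
  also have "card ({..<g} \<inter> - {k. i k = 2}) = g - card {k\<in>{..<g}. i k = 2}"
  proof -
    have "{..<g} \<inter> - {k. i k = 2} = {..<g} - {k\<in>{..<g}. i k = 2}" by auto
    moreover have "card ({..<g} - {k\<in>{..<g}. i k = 2}) = card {..<g} - card {k\<in>{..<g}. i k = 2}"
      by (rule card_Diff_subset) auto
    ultimately show ?thesis by simp
  qed
  also have "{..<g} \<inter> {k. i k = 2} = {k\<in>{..<g}. i k = 2}" by auto
  finally show ?thesis by (simp add: mult.commute)
qed

lemma term_formula:
  assumes xs: "xs \<in> tensor_idx g"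
  defines "P \<equiv> card {k\<in>{..<g}. xs ! k = 2}" and "Q \<equiv> card {k\<in>{..<g}. xs ! (g + k) = 2}"
  shows "Re (C xs * (\<Prod>k<g. cnj (xvec t f (xs ! k))) * (\<Prod>k<g. xvec t f (xs ! (g + k))))
      = Fpq g P Q t * (Re (C xs) * cos ((real P - real Q) * f) + (- Im (C xs)) * sin ((real P - real Q) * f))"
    and "P \<le> g" "Q \<le> g"
proof -
  have l: "length xs = 2 * g" "set xs \<subseteq> {1,2}" using xs by (auto simp: tensor_idx_def)
  have i1: "\<And>k. k < g \<Longrightarrow> xs ! k \<in> {1,2}" using l nth_mem[of _ xs] by force
  have i2: "\<And>k. k < g \<Longrightarrow> xs ! (g + k) \<in> {1,2}" using l nth_mem[of _ xs] by force
  show PG: "P \<le> g" unfolding P_def by (rule order.trans[OF card_mono[of "{..<g}"]]) auto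
  show QG: "Q \<le> g" unfolding Q_def by (rule order.trans[OF card_mono[of "{..<g}"]]) auto
  have p1: "(\<Prod>k<g. cnj (xvec t f (xs ! k))) = complex_of_real (cos t) ^ (g - P) * (complex_of_real (sin t) * cis f) ^ P"
    using prod_split[of g "\<lambda>k. xs ! k" "\<lambda>i. cnj (xvec t f i)", OF i1] unfolding P_def
    by (simp add: xvec_def cis_cnj)
  have p2: "(\<Prod>k<g. xvec t f (xs ! (g + k))) = complex_of_real (cos t) ^ (g - Q) * (complex_of_real (sin t) * cis (- f)) ^ Q"
    using prod_split[of g "\<lambda>k. xs ! (g + k)" "\<lambda>i. xvec t f i", OF i2] unfolding Q_def
    by (simp add: xvec_def)
  have e1: "cos t ^ (g - P) * cos t ^ (g - Q) = cos t ^ (2 * g - P - Q)"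
  proof -
    have "g - P + (g - Q) = 2 * g - P - Q" using PG QG by simp
    then show ?thesis by (metis power_add)
  qed
  have e2: "cis f ^ P * cis (- f) ^ Q = cis ((real P - real Q) * f)"
  proof -
    have "cis f ^ P * cis (- f) ^ Q = cis (real P * f + real Q * (- f))" by (simp only: Complex.DeMoivre cis_mult)
    also have "real P * f + real Q * (- f) = (real P - real Q) * f" by (simp add: algebra_simps)
    finally show ?thesis .
  qed
  have "(\<Prod>k<g. cnj (xvec t f (xs ! k))) * (\<Prod>k<g. xvec t f (xs ! (g + k)))
     = complex_of_real (cos t ^ (g - P) * cos t ^ (g - Q) * sin t ^ (P + Q)) * (cis f ^ P * cis (- f) ^ Q)"
    unfolding p1 p2 by (simp add: power_mult_distrib power_add algebra_simps)
  also have "\<dots> = complex_of_real (Fpq g P Q t) * cis ((real P - real Q) * f)"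
    unfolding e1 e2 Fpq_def by simp
  finally have eq: "C xs * (\<Prod>k<g. cnj (xvec t f (xs ! k))) * (\<Prod>k<g. xvec t f (xs ! (g + k)))
     = C xs * (complex_of_real (Fpq g P Q t) * cis ((real P - real Q) * f))"
    by (simp add: mult.assoc)
  show "Re (C xs * (\<Prod>k<g. cnj (xvec t f (xs ! k))) * (\<Prod>k<g. xvec t f (xs ! (g + k))))
      = Fpq g P Q t * (Re (C xs) * cos ((real P - real Q) * f) + (- Im (C xs)) * sin ((real P - real Q) * f))"
    unfolding eq by (simp add: algebra_simps)
qed

theorem proposition3p1:
  fixes g :: nat and C :: "nat list \<Rightarrow> complex"
  assumes "g \<ge> 1"
    and "tensor_hermitian g C"
    and "tensor_semisymmetric g C"
  shows "\<exists>(M :: nat \<Rightarrow> nat \<Rightarrow> real ^ 3 ^ 3) (cx :: real) (cy :: real).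
           (\<forall>\<alpha> \<in> {1..g}. \<forall>\<beta> \<in> {1..g}. transpose (M \<alpha> \<beta>) = M \<alpha> \<beta>) \<and>
           (\<forall>\<theta> \<phi> :: real.
              tensor_eval g C (xvec \<theta> \<phi>) =
                complex_of_real ((\<Sum>\<alpha> = 1..g. \<Sum>\<beta> = 1..g.
                   zvec \<alpha> \<beta> \<theta> \<phi> \<bullet> (M \<alpha> \<beta> *v zvec \<alpha> \<beta> \<theta> \<phi>)) + cx) \<and>
              tensor_eval g C (yvec \<theta> \<phi>) =
                complex_of_real ((\<Sum>\<alpha> = 1..g. \<Sum>\<beta> = 1..g.
                   (-1) ^ \<alpha> * (zvec \<alpha> \<beta> \<theta> \<phi> \<bullet> (M \<alpha> \<beta> *v zvec \<alpha> \<beta> \<theta> \<phi>))) + cy))"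
proof -
  define Pc where "Pc xs = card {k\<in>{..<g}. xs ! k = 2}" for xs :: "nat list"
  define Qc where "Qc xs = card {k\<in>{..<g}. xs ! (g + k) = 2}" for xs :: "nat list"
  define T where "T xs t f = Fpq g (Pc xs) (Qc xs) t * (Re (C xs) * cos ((real (Pc xs) - real (Qc xs)) * f)
      + (- Im (C xs)) * sin ((real (Pc xs) - real (Qc xs)) * f))" for xs t f
  have "RR g (\<lambda>t f. \<Sum>xs\<in>tensor_idx g. T xs t f) (\<lambda>t f. \<Sum>xs\<in>tensor_idx g. T xs (t + pi/2) f)"
  proof (rule RR_sum[OF finite_tensor_idx])
    fix xs assume xs: "xs \<in> tensor_idx g"
    show "RR g (T xs) (\<lambda>t f. T xs (t + pi / 2) f)"
      unfolding T_def using assms(1) term_formula(2,3)[OF xs] unfolding Pc_def Qc_def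
      by (intro RR_pq) auto
  qed
  then obtain M cx cy where M: "\<forall>a\<in>{1..g}. \<forall>b\<in>{1..g}. transpose (M a b) = M a b"
    and MQ: "\<And>t f. (\<Sum>xs\<in>tensor_idx g. T xs t f) = Qx g M t f + cx \<and> (\<Sum>xs\<in>tensor_idx g. T xs (t + pi/2) f) = Qy g M t f + cy"
    unfolding RR_def by blast
  have X: "tensor_eval g C (xvec t f) = complex_of_real (\<Sum>xs\<in>tensor_idx g. T xs t f)" for t f
  proof -
    have "Re (tensor_eval g C (xvec t f)) = (\<Sum>xs\<in>tensor_idx g. T xs t f)"
      unfolding tensor_eval_def Re_sum T_def Pc_def Qc_def
      by (intro sum.cong refl term_formula(1))
    moreover have "Im (tensor_eval g C (xvec t f)) = 0" by (rule eval_real[OF assms(2)])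
    ultimately show ?thesis by (simp add: complex_eq_iff)
  qed
  show ?thesis
  proof (intro exI conjI allI)
    show "\<forall>a\<in>{1..g}. \<forall>b\<in>{1..g}. transpose (M a b) = M a b" by (rule M)
  next
    fix t f
    show "tensor_eval g C (xvec t f) = complex_of_real ((\<Sum>a = 1..g. \<Sum>b = 1..g. zvec a b t f \<bullet> (M a b *v zvec a b t f)) + cx)"
      using X MQ unfolding Qx_def by simp
    show "tensor_eval g C (yvec t f) = complex_of_real ((\<Sum>a = 1..g. \<Sum>b = 1..g. (-1) ^ a * (zvec a b t f \<bullet> (M a b *v zvec a b t f))) + cy)"
    proof -
      have "tensor_eval g C (yvec t f) = complex_of_real (\<Sum>xs\<in>tensor_idx g. T xs (t + pi/2) f)"
        unfolding eval_y X ..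
      also have "\<dots> = complex_of_real (Qy g M t f + cy)" using conjunct2[OF MQ[of t f]] by (simp only:)
      finally show ?thesis unfolding Qy_def .
    qed
  qed
qed

end
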